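(* For every integer $n\ge 0$, $|\mathfrak D^1_{2n}(2341,2413)|=s_{n+1}$, where $s_m$ is the $m$th little Schröder number.
   Context: A Dumont permutation of the first kind of length $2n$ is a permutation $\pi\in\mathfrak S_{2n}$ such that for every $i=1,\dots,2n$: if $\pi(i)$ is even then $i<2n$ and $\pi(i)>\pi(i+1)$; if $\pi(i)$ is odd then $i=2n$ or $\pi(i)<\pi(i+1)$. $\mathfrak D^1_{2n}$ denotes the set of these ($\mathfrak D^1_0$ consists of the empty permutation). A permutation $\sigma$ contains a pattern $\tau\in\mathfrak S_k$ if some subsequence $(\sigma(i_1),\dots,\sigma(i_k))$, $i_1<\dots<i_k$, is order-isomorphic to $\tau$; otherwise $\sigma$ avoids $\tau$. $\mathfrak D^1_{2n}(T)$ denotes the set of permutations in $\mathfrak D^1_{2n}$ avoiding every pattern in $T$. The little Schröder numbers $s_1,s_2,\dots$ ($1,1,3,11,45,\dots$) are defined by the generating function $\sum_{m\ge 1}s_mx^m=\frac{1+x-\sqrt{1-6x+x^2}}{4}$. *)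

theory Defs
  imports Main "HOL-Library.Sublist" "HOL-Computational_Algebra.Formal_Power_Series"
begin

text \<open>Permutations of [1..m] are represented as lists p; pi(i) = p ! (i - 1).\<close>

definition is_perm_list :: "nat \<Rightarrow> nat list \<Rightarrow> bool" where
  "is_perm_list m p \<longleftrightarrow> length p = m \<and> distinct p \<and> set p = {1..m}"

text \<open>Dumont permutations of the first kind of length 2n (positions 0-indexed).\<close>
definition dumont1 :: "nat \<Rightarrow> nat list set" where
  "dumont1 n = {p. is_perm_list (2*n) p \<and>
     (\<forall>i < 2*n. (even (p ! i) \<longrightarrow> i + 1 < 2*n \<and> p ! i > p ! (i+1)) \<and>
                 (odd (p ! i) \<longrightarrow> i + 1 = 2*n \<or> p ! i < p ! (i+1)))}"

definition order_iso :: "nat list \<Rightarrow> nat list \<Rightarrow> bool" where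
  "order_iso xs ys \<longleftrightarrow> length xs = length ys \<and>
     (\<forall>a < length xs. \<forall>b < length xs. xs ! a < xs ! b \<longleftrightarrow> ys ! a < ys ! b)"

definition contains_pattern :: "nat list \<Rightarrow> nat list \<Rightarrow> bool" where
  "contains_pattern \<sigma> \<tau> \<longleftrightarrow> (\<exists>xs. subseq xs \<sigma> \<and> order_iso xs \<tau>)"

definition avoids_all :: "nat list \<Rightarrow> nat list set \<Rightarrow> bool" where
  "avoids_all \<sigma> T \<longleftrightarrow> (\<forall>\<tau>\<in>T. \<not> contains_pattern \<sigma> \<tau>)"

definition dumont1_avoiding :: "nat \<Rightarrow> nat list set \<Rightarrow> nat list set" where
  "dumont1_avoiding n T = {p \<in> dumont1 n. avoids_all p T}"

text \<open>Little Schroeder numbers: coefficients of (1 + x - sqrt(1 - 6x + x^2))/4,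
  the square root being the formal power series square root with constant term 1.\<close>
definition little_schroeder_gf :: "real fps" where
  "little_schroeder_gf = fps_const (1/4) *
     (1 + fps_X - fps_radical (\<lambda>k x. root k x) 2 (1 - fps_const 6 * fps_X + fps_X ^ 2))"

definition little_schroeder :: "nat \<Rightarrow> real" where
  "little_schroeder m = fps_nth little_schroeder_gf m"

end

theory Submission
  imports Defs
begin

unbundle fps_syntax

function cc :: "nat \<Rightarrow> nat" where
  "cc 0 = 1"
| "cc (Suc n) = (\<Sum>k\<le>n. cc k * cc (n-k)) + (\<Sum>k<n. cc k * cc (n-k))"
  by pat_completeness auto
termination by (relation "measure id") auto

lemma cc_rec: "real (cc (Suc n)) = 2 * (\<Sum>k\<le>n. real (cc k) * real (cc (n-k))) - real (cc n)"
proof -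
  have "(\<Sum>k\<le>n. cc k * cc (n-k)) = (\<Sum>k<n. cc k * cc (n-k)) + cc n"
    by (simp add: lessThan_Suc_atMost[symmetric])
  then have h: "real (cc (Suc n)) = 2 * real (\<Sum>k<n. cc k * cc (n-k)) + real (cc n)" by simp
  also have "\<dots> = 2 * real (\<Sum>k\<le>n. cc k * cc (n-k)) - real (cc n)" using h by simp
  finally show ?thesis by simp
qed

definition AA :: "real fps" where "AA = Abs_fps (\<lambda>n. real (cc n))"

lemma AA_eq: "AA = 1 + fps_X * (2 * AA^2 - AA)"
proof (rule fps_ext)
  fix n show "AA $ n = (1 + fps_X * (2 * AA^2 - AA)) $ n"
  proof (cases n)
    case 0 then show ?thesis by (simp add: AA_def)
  next
    case (Suc m)
    have "(AA^2) $ m = (\<Sum>k\<le>m. real (cc k) * real (cc (m-k)))"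
      by (simp add: power2_eq_square fps_mult_nth AA_def atLeast0AtMost)
    then have "(2 * AA^2) $ m = 2 * (\<Sum>k\<le>m. real (cc k) * real (cc (m-k)))"
      by (subst numeral_fps_const) simp
    then show ?thesis using Suc by (simp add: AA_def cc_rec lessThan_Suc_atMost[symmetric])
  qed
qed

theorem main_fps: "little_schroeder (n+1) = real (cc n)"
proof -
  define S where "S = fps_X * AA"
  define Q where "Q = 1 + fps_X - 4 * S"
  have Q0: "Q $ 0 = 1" by (simp add: Q_def S_def)
  have key: "2 * S^2 - (1 + fps_X) * S + fps_X = 0"
  proof -
    have "2 * S^2 - (1 + fps_X) * S + fps_X = fps_X * (2 * fps_X * AA^2 - (1+fps_X) * AA + 1)"
      by (simp add: S_def algebra_simps power2_eq_square)
    also have "2 * fps_X * AA^2 - (1+fps_X) * AA + 1 = 0"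
      using AA_eq by (simp add: algebra_simps)
    finally show ?thesis by simp
  qed
  have QQ: "Q^2 = 1 - fps_const 6 * fps_X + fps_X^2"
  proof -
    have "Q^2 = (1+fps_X)^2 + 8 * (2 * S^2 - (1 + fps_X) * S + fps_X) - 8 * fps_X"
      by (simp add: Q_def algebra_simps power2_eq_square)
    also have "\<dots> = 1 - fps_const 6 * fps_X + fps_X^2"
      by (simp only: key) (simp add: algebra_simps power2_eq_square flip: numeral_fps_const)
    finally show ?thesis .
  qed
  have R: "fps_radical (\<lambda>k x. root k x) 2 (1 - fps_const 6 * fps_X + fps_X ^ 2) = Q"
    using radical_power[of "\<lambda>k x. root k x" 1 Q] Q0 QQ by (simp add: numeral_2_eq_2)
  have "little_schroeder_gf = S"
    proof -
    have "fps_const (1/4) * (4::real fps) = 1"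
      by (simp add: numeral_fps_const)
    then show ?thesis unfolding little_schroeder_gf_def R
      by (simp add: Q_def algebra_simps mult.assoc[symmetric])
  qed
  then have "little_schroeder (n+1) = (fps_X * AA) $ Suc n" by (simp add: little_schroeder_def S_def)
  also have "\<dots> = real (cc n)" by (simp add: AA_def fps_X_mult_nth)
  finally show ?thesis .
qed


definition okp :: "nat \<Rightarrow> nat \<Rightarrow> bool" where
  "okp a b \<longleftrightarrow> (even a \<longrightarrow> b < a) \<and> (odd a \<longrightarrow> a < b)"

definition dc :: "nat list \<Rightarrow> bool" where
  "dc p \<longleftrightarrow> successively okp p \<and> (p \<noteq> [] \<longrightarrow> odd (last p))"

definition av :: "nat list \<Rightarrow> bool" where
  "av p \<longleftrightarrow> \<not>(\<exists>a b c d. subseq [a,b,c,d] p \<and> d<a \<and> a<b \<and> b<c) \<and>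
            \<not>(\<exists>a b c d. subseq [a,b,c,d] p \<and> c<a \<and> a<d \<and> d<b)"

lemma all_less_4: "(\<forall>a<(4::nat). P a) \<longleftrightarrow> P 0 \<and> P 1 \<and> P 2 \<and> P 3"
  by (auto simp: numeral_eq_Suc less_Suc_eq)

lemma all_less_4': "(\<forall>a<Suc (Suc (Suc (Suc 0))). P a) \<longleftrightarrow> P 0 \<and> P 1 \<and> P 2 \<and> P 3"
  by (auto simp: numeral_eq_Suc less_Suc_eq)

lemma len4: "length xs = 4 \<Longrightarrow> \<exists>a b c d. xs = [a,b,c,d]"
  by (cases xs; cases "tl xs"; cases "tl (tl xs)"; cases "tl (tl (tl xs))") (auto simp: numeral_eq_Suc)

lemma cp1: "contains_pattern p [2,3,4,1] \<longleftrightarrow> (\<exists>a b c d. subseq [a,b,c,d] p \<and> d<a \<and> a<b \<and> b<c)"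
proof
  assume "contains_pattern p [2,3,4,1]"
  then obtain xs where xs: "subseq xs p" "order_iso xs [2,3,4,1]" unfolding contains_pattern_def by blast
  then have "length xs = 4" by (simp add: order_iso_def)
  then obtain a b c d where "xs = [a,b,c,d]" using len4 by blast
  with xs show "\<exists>a b c d. subseq [a,b,c,d] p \<and> d<a \<and> a<b \<and> b<c"
    by (auto simp: order_iso_def all_less_4 all_less_4')
next
  assume "\<exists>a b c d. subseq [a,b,c,d] p \<and> d<a \<and> a<b \<and> b<c"
  then obtain a b c d where "subseq [a,b,c,d] p" "d<a" "a<b" "b<c" by blast
  then show "contains_pattern p [2,3,4,1]" unfolding contains_pattern_def
    by (intro exI[of _ "[a,b,c,d]"]) (auto simp: order_iso_def all_less_4 all_less_4')
qed

lemma cp2: "contains_pattern p [2,4,1,3] \<longleftrightarrow> (\<exists>a b c d. subseq [a,b,c,d] p \<and> c<a \<and> a<d \<and> d<b)"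
proof
  assume "contains_pattern p [2,4,1,3]"
  then obtain xs where xs: "subseq xs p" "order_iso xs [2,4,1,3]" unfolding contains_pattern_def by blast
  then have "length xs = 4" by (simp add: order_iso_def)
  then obtain a b c d where "xs = [a,b,c,d]" using len4 by blast
  with xs show "\<exists>a b c d. subseq [a,b,c,d] p \<and> c<a \<and> a<d \<and> d<b"
    by (auto simp: order_iso_def all_less_4 all_less_4')
next
  assume "\<exists>a b c d. subseq [a,b,c,d] p \<and> c<a \<and> a<d \<and> d<b"
  then obtain a b c d where "subseq [a,b,c,d] p" "c<a" "a<d" "d<b" by blast
  then show "contains_pattern p [2,4,1,3]" unfolding contains_pattern_def
    by (intro exI[of _ "[a,b,c,d]"]) (auto simp: order_iso_def all_less_4 all_less_4')
qed

lemma avoids_iff: "avoids_all p {[2,3,4,1],[2,4,1,3]} \<longleftrightarrow> av p"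
  unfolding avoids_all_def av_def using cp1[of p] cp2[of p] by auto

lemma dcond_iff: "(\<forall>i < length p. (even (p ! i) \<longrightarrow> i + 1 < length p \<and> p ! i > p ! (i+1)) \<and>
                 (odd (p ! i) \<longrightarrow> i + 1 = length p \<or> p ! i < p ! (i+1))) \<longleftrightarrow> dc p"
proof (induction p)
  case Nil then show ?case by (simp add: dc_def)
next
  case (Cons x xs)
  have "(\<forall>i < length (x#xs). (even ((x#xs) ! i) \<longrightarrow> i + 1 < length (x#xs) \<and> (x#xs) ! i > (x#xs) ! (i+1)) \<and>
                 (odd ((x#xs) ! i) \<longrightarrow> i + 1 = length (x#xs) \<or> (x#xs) ! i < (x#xs) ! (i+1)))
     \<longleftrightarrow> ((even x \<longrightarrow> xs \<noteq> [] \<and> x > hd xs) \<and> (odd x \<longrightarrow> xs = [] \<or> x < hd xs)) \<and>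
        (\<forall>i < length xs. (even (xs ! i) \<longrightarrow> i + 1 < length xs \<and> xs ! i > xs ! (i+1)) \<and>
                 (odd (xs ! i) \<longrightarrow> i + 1 = length xs \<or> xs ! i < xs ! (i+1)))"
    by (cases xs) (auto simp: All_less_Suc2)
  also have "\<dots> \<longleftrightarrow> dc (x#xs)"
    using Cons by (cases xs) (auto simp: dc_def okp_def)
  finally show ?case .
qed

definition VV :: "nat \<Rightarrow> nat list set" where
  "VV n = dumont1_avoiding n {[2,3,4,1],[2,4,1,3]}"

lemma mem_VV: "p \<in> VV n \<longleftrightarrow> is_perm_list (2*n) p \<and> dc p \<and> av p"
proof -
  have "p \<in> dumont1 n \<longleftrightarrow> is_perm_list (2*n) p \<and> dc p"
    unfolding dumont1_def using dcond_iff[of p] by (auto simp: is_perm_list_def)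
  then show ?thesis using avoids_iff[of p] by (auto simp: VV_def dumont1_avoiding_def)
qed



lemma subseq_set: "subseq xs ys \<Longrightarrow> set xs \<subseteq> set ys"
  by (induction rule: list_emb.induct) auto

lemma av_sub: "subseq xs ys \<Longrightarrow> av ys \<Longrightarrow> av xs"
  unfolding av_def by (meson subseq_order.trans)

lemma subseq_map_inv: "subseq xs (map f ys) \<Longrightarrow> \<exists>zs. subseq zs ys \<and> xs = map f zs"
  by (metis subseq_conv_nths nths_map)

lemma av_shift: "av (map (\<lambda>v. v + c) p) \<longleftrightarrow> av p"
proof
  assume h: "av (map (\<lambda>v. v + c) p)"
  show "av p" unfolding av_def
  proof (intro conjI notI)
    assume "\<exists>a b c d. subseq [a,b,c,d] p \<and> d<a \<and> a<b \<and> b<c"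
    then obtain a b e d where "subseq [a,b,e,d] p" "d<a" "a<b" "b<e" by blast
    then have "subseq [a+c,b+c,e+c,d+c] (map (\<lambda>v. v + c) p)" using subseq_map[of "[a,b,e,d]" p "\<lambda>v. v + c"] by simp
    moreover have "d+c<a+c" "a+c<b+c" "b+c<e+c" using \<open>d<a\<close> \<open>a<b\<close> \<open>b<e\<close> by simp_all
    ultimately show False using h unfolding av_def by blast
  next
    assume "\<exists>a b c d. subseq [a,b,c,d] p \<and> c<a \<and> a<d \<and> d<b"
    then obtain a b e d where "subseq [a,b,e,d] p" "e<a" "a<d" "d<b" by blast
    then have "subseq [a+c,b+c,e+c,d+c] (map (\<lambda>v. v + c) p)" using subseq_map[of "[a,b,e,d]" p "\<lambda>v. v + c"] by simp
    moreover have "e+c<a+c" "a+c<d+c" "d+c<b+c" using \<open>e<a\<close> \<open>a<d\<close> \<open>d<b\<close> by simp_all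
    ultimately show False using h unfolding av_def by blast
  qed
next
  assume h: "av p"
  show "av (map (\<lambda>v. v + c) p)" unfolding av_def
  proof (intro conjI notI)
    assume "\<exists>a b c' d. subseq [a,b,c',d] (map (\<lambda>v. v + c) p) \<and> d<a \<and> a<b \<and> b<c'"
    then obtain a b e d where s: "subseq [a,b,e,d] (map (\<lambda>v. v + c) p)" "d<a" "a<b" "b<e" by blast
    from subseq_map_inv[OF s(1)] obtain zs where zs: "subseq zs p" and eq: "[a,b,e,d] = map (\<lambda>v. v + c) zs" by iprover
    have "length zs = 4" using arg_cong[OF eq, of length] by simp
    then obtain a' b' e' d' where z: "zs = [a',b',e',d']" using len4 by blast
    with eq have "a = a'+c" "b=b'+c" "e=e'+c" "d=d'+c" by simp_all
    with s have "subseq [a',b',e',d'] p" "d'<a'" "a'<b'" "b'<e'" using zs z by simp_all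
    with h show False unfolding av_def by blast
  next
    assume "\<exists>a b c' d. subseq [a,b,c',d] (map (\<lambda>v. v + c) p) \<and> c'<a \<and> a<d \<and> d<b"
    then obtain a b e d where s: "subseq [a,b,e,d] (map (\<lambda>v. v + c) p)" "e<a" "a<d" "d<b" by blast
    from subseq_map_inv[OF s(1)] obtain zs where zs: "subseq zs p" and eq: "[a,b,e,d] = map (\<lambda>v. v + c) zs" by iprover
    have "length zs = 4" using arg_cong[OF eq, of length] by simp
    then obtain a' b' e' d' where z: "zs = [a',b',e',d']" using len4 by blast
    with eq have "a = a'+c" "b=b'+c" "e=e'+c" "d=d'+c" by simp_all
    with s have "subseq [a',b',e',d'] p" "e'<a'" "a'<d'" "d'<b'" using zs z by simp_all
    with h show False unfolding av_def by blast
  qed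
qed



lemma split4:
  assumes "subseq [a,b,c,d] (s @ t)"
  shows "subseq [a,b,c,d] s \<or> subseq [a,b,c,d] t \<or> (a \<in> set s \<and> c \<in> set t \<and> d \<in> set t) \<or>
         (a \<in> set s \<and> b \<in> set s \<and> c \<in> set s \<and> d \<in> set t)"
proof -
  obtain xs1 xs2 where e: "[a,b,c,d] = xs1 @ xs2" "subseq xs1 s" "subseq xs2 t"
    using assms by (rule subseq_appendE)
  have s1: "set xs1 \<subseteq> set s" and s2: "set xs2 \<subseteq> set t" using e subseq_set by blast+
  show ?thesis
  proof (cases xs1)
    case Nil then show ?thesis using e by simp
  next
    case (Cons x1 r1)
    show ?thesis
    proof (cases r1)
      case Nil then show ?thesis using e s1 s2 Cons by auto
    next
      case (Cons x2 r2)
      show ?thesis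
      proof (cases r2)
        case Nil then show ?thesis using e s1 s2 Cons \<open>xs1 = x1 # r1\<close> by auto
      next
        case (Cons x3 r3)
        show ?thesis
        proof (cases r3)
          case Nil then show ?thesis using e s1 s2 Cons \<open>xs1 = x1 # r1\<close> \<open>r1 = x2 # r2\<close> by auto
        next
          case (Cons x4 r4)
          then have "xs2 = []" "xs1 = [a,b,c,d]" using e \<open>xs1 = x1 # r1\<close> \<open>r1 = x2 # r2\<close> \<open>r2 = x3 # r3\<close> by auto
          then show ?thesis using e by simp
        qed
      qed
    qed
  qed
qed

lemma av_append:
  assumes "av s" "av t" "\<forall>x\<in>set s. \<forall>y\<in>set t. x < y"
  shows "av (s @ t)"
  unfolding av_def
proof (intro conjI notI)
  assume "\<exists>a b c d. subseq [a,b,c,d] (s @ t) \<and> d<a \<and> a<b \<and> b<c"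
  then obtain a b c d where h: "subseq [a,b,c,d] (s @ t)" "d<a" "a<b" "b<c" by blast
  from split4[OF h(1)] show False
  proof (elim disjE)
    assume "subseq [a,b,c,d] s" then show False using assms(1) h unfolding av_def by blast
  next
    assume "subseq [a,b,c,d] t" then show False using assms(2) h unfolding av_def by blast
  qed (use assms(3) h in fastforce)+
next
  assume "\<exists>a b c d. subseq [a,b,c,d] (s @ t) \<and> c<a \<and> a<d \<and> d<b"
  then obtain a b c d where h: "subseq [a,b,c,d] (s @ t)" "c<a" "a<d" "d<b" by blast
  from split4[OF h(1)] show False
  proof (elim disjE)
    assume "subseq [a,b,c,d] s" then show False using assms(1) h unfolding av_def by blast
  next
    assume "subseq [a,b,c,d] t" then show False using assms(2) h unfolding av_def by blast
  qed (use assms(3) h in fastforce)+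
qed

lemma av_single: "av [x]"
  unfolding av_def using list_emb_length by fastforce

lemma av_snoc_max: "av s \<Longrightarrow> \<forall>y\<in>set s. y < M \<Longrightarrow> av (s @ [M])"
  by (rule av_append) (auto simp: av_single)

lemma av_cons_max:
  assumes "av s" "\<forall>y\<in>set s. y < M"
  shows "av (M # s)"
  unfolding av_def
proof (intro conjI notI)
  assume "\<exists>a b c d. subseq [a,b,c,d] (M # s) \<and> d<a \<and> a<b \<and> b<c"
  then obtain a b c d where h: "subseq [a,b,c,d] (M # s)" "d<a" "a<b" "b<c" by blast
  show False
  proof (cases "a = M")
    case True
    then have "subseq [b,c,d] s" using h(1) by simp
    then have "b \<in> set s" using subseq_set by fastforce
    then show False using assms(2) True h by fastforce
  next
    case False
    then have "subseq [a,b,c,d] s" using h(1) by simp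
    then show False using assms(1) h unfolding av_def by blast
  qed
next
  assume "\<exists>a b c d. subseq [a,b,c,d] (M # s) \<and> c<a \<and> a<d \<and> d<b"
  then obtain a b c d where h: "subseq [a,b,c,d] (M # s)" "c<a" "a<d" "d<b" by blast
  show False
  proof (cases "a = M")
    case True
    then have "subseq [b,c,d] s" using h(1) by simp
    then have "b \<in> set s" using subseq_set by fastforce
    then show False using assms(2) True h by fastforce
  next
    case False
    then have "subseq [a,b,c,d] s" using h(1) by simp
    then show False using assms(1) h unfolding av_def by blast
  qed
qed

lemma av_T2:
  assumes "av s" "\<forall>y\<in>set s. y < x" "x < M"
  shows "av (x # M # s)"
  unfolding av_def
proof (intro conjI notI)
  assume "\<exists>a b c d. subseq [a,b,c,d] (x # M # s) \<and> d<a \<and> a<b \<and> b<c"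
  then obtain a b c d where h: "subseq [a,b,c,d] (x # M # s)" "d<a" "a<b" "b<c" by blast
  show False
  proof (cases "a = x")
    case True
    then have h2: "subseq [b,c,d] (M # s)" using h(1) by simp
    show False
    proof (cases "b = M")
      case True
      then have "subseq [c,d] s" using h2 by simp
      then have "c \<in> set s" using subseq_set by fastforce
      then show False using assms h True \<open>a = x\<close> by fastforce
    next
      case False
      then have "subseq [b,c,d] s" using h2 by simp
      then have "b \<in> set s" using subseq_set by fastforce
      then show False using assms h \<open>a = x\<close> by fastforce
    qed
  next
    case False
    then have h2: "subseq [a,b,c,d] (M # s)" using h(1) by simp
    show False
    proof (cases "a = M")
      case True
      then have "subseq [b,c,d] s" using h2 by simp
      then have "b \<in> set s" using subseq_set by fastforce
      then show False using assms h True by fastforce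
    next
      case False
      then have "subseq [a,b,c,d] s" using h2 by simp
      then show False using assms(1) h unfolding av_def by blast
    qed
  qed
next
  assume "\<exists>a b c d. subseq [a,b,c,d] (x # M # s) \<and> c<a \<and> a<d \<and> d<b"
  then obtain a b c d where h: "subseq [a,b,c,d] (x # M # s)" "c<a" "a<d" "d<b" by blast
  show False
  proof (cases "a = x")
    case True
    then have h2: "subseq [b,c,d] (M # s)" using h(1) by simp
    show False
    proof (cases "b = M")
      case True
      then have "subseq [c,d] s" using h2 by simp
      then have "d \<in> set s" using subseq_set by fastforce
      then show False using assms h True \<open>a = x\<close> by fastforce
    next
      case False
      then have "subseq [b,c,d] s" using h2 by simp
      then have "b \<in> set s" using subseq_set by fastforce
      then show False using assms h \<open>a = x\<close> by fastforce
    qed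
  next
    case False
    then have h2: "subseq [a,b,c,d] (M # s)" using h(1) by simp
    show False
    proof (cases "a = M")
      case True
      then have "subseq [b,c,d] s" using h2 by simp
      then have "b \<in> set s" using subseq_set by fastforce
      then show False using assms h True by fastforce
    next
      case False
      then have "subseq [a,b,c,d] s" using h2 by simp
      then show False using assms(1) h unfolding av_def by blast
    qed
  qed
qed



lemma okp_shift: "even c \<Longrightarrow> okp (a + c) (b + c) \<longleftrightarrow> okp a b"
  by (auto simp: okp_def)

lemma dc_shift:
  assumes "even c" shows "dc (map (\<lambda>v. v + c) p) \<longleftrightarrow> dc p"
proof -
  have "successively okp (map (\<lambda>v. v + c) p) \<longleftrightarrow> successively okp p"
    by (simp add: successively_map okp_shift[OF assms])
  moreover have "p \<noteq> [] \<Longrightarrow> last (map (\<lambda>v. v + c) p) = last p + c" by (simp add: last_map)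
  ultimately show ?thesis using assms by (auto simp: dc_def)
qed

lemma succ_mid: "successively P (xs @ a # b # ys) \<Longrightarrow> P a b"
  by (induction xs) (auto simp: successively_Cons)

lemma lower_block:
  fixes A B :: "nat set"
  assumes "A \<union> B = {1..m}" "A \<inter> B = {}" "\<forall>a\<in>A. \<forall>b\<in>B. a < b"
  shows "A = {1..card A}"
proof (cases "A = {}")
  case True then show ?thesis by simp
next
  case False
  have fin: "finite A" using assms(1) by (metis finite_Un finite_atLeastAtMost)
  define t where "t = Max A"
  have tA: "t \<in> A" using Max_in[OF fin False] t_def by simp
  have "A = {1..t}"
  proof
    show "A \<subseteq> {1..t}" using assms(1) Max_ge[OF fin] t_def by auto
    show "{1..t} \<subseteq> A"
    proof
      fix y assume y: "y \<in> {1..t}"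
      have "t \<le> m" using tA assms(1) by auto
      then have "y \<in> A \<union> B" using y assms(1) by auto
      moreover have "y \<notin> B" using assms(3) tA y by fastforce
      ultimately show "y \<in> A" by blast
    qed
  qed
  then show ?thesis by simp
qed

lemma subseq_infix: "subseq R (L @ M @ R @ T)"
  by (metis subseq_drop_many subseq_rev_drop_many subseq_order.order_refl append.assoc)

lemma core:
  assumes perm: "is_perm_list (2*Suc n) (L @ mid @ R @ T)"
  and d: "dc (L @ mid @ R @ T)" and a: "av (L @ mid @ R @ T)"
  and ms: "set (mid @ T) = {2*n+1, 2*n+2}" and mne: "mid \<noteq> []"
  and sep: "\<forall>a\<in>set L. \<forall>c\<in>set R. a < c"
  and RT: "R \<noteq> [] \<or> T \<noteq> []"
  shows "\<exists>k m. k + m = n \<and> L \<in> VV k \<and> (\<exists>\<rho>\<in>VV m. R = map (\<lambda>v. v + 2*k) \<rho>)"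
proof -
  have dist: "distinct (L @ mid @ R @ T)" and st: "set (L @ mid @ R @ T) = {1..2*n+2}"
    using perm by (auto simp: is_perm_list_def)
  have dL: "distinct L" and dR: "distinct R" using dist by auto
  have LR: "set L \<union> set R = {1..2*n}"
  proof -
    have "set L \<inter> set (mid @ T) = {}" "set R \<inter> set (mid @ T) = {}" using dist by auto
    then have "set L \<union> set R = set (L @ mid @ R @ T) - set (mid @ T)" by auto
    also have "\<dots> = {1..2*n+2} - {2*n+1, 2*n+2}" using st ms by simp
    also have "\<dots> = {1..2*n}" by auto
    finally show ?thesis .
  qed
  have LRd: "set L \<inter> set R = {}" using dist by auto
  define j where "j = length L"
  have cardL: "card (set L) = j" using dL j_def by (simp add: distinct_card)
  have hL: "set L = {1..j}" using lower_block[OF LR LRd sep] cardL by simp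
  have jle: "j \<le> 2*n"
  proof -
    have "card (set L) \<le> card {1..2*n}" using LR by (intro card_mono) auto
    then show ?thesis using cardL by simp
  qed
  have hR: "set R = {j+1..2*n}"
  proof -
    have "set R = (set L \<union> set R) - set L" using LRd by auto
    also have "\<dots> = {1..2*n} - {1..j}" using LR hL by simp
    also have "\<dots> = {j+1..2*n}" by auto
    finally show ?thesis .
  qed
  have lenR: "length R = 2*n - j" using dR hR by (metis card_atLeastAtMost distinct_card diff_Suc_Suc Suc_eq_plus1)
  have sRT: "successively okp (R @ T)" and sL: "successively okp L"
    using d unfolding dc_def by (auto simp: successively_append_iff)
  have big: "\<forall>v\<in>set (mid @ T). \<forall>w\<in>set L \<union> set R. w < v" using LR ms by auto
  have lastR: "odd (last R)" if "R \<noteq> []"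
  proof (cases T)
    case Nil
    then have "last (L @ mid @ R @ T) = last R" using that by simp
    then show ?thesis using d that unfolding dc_def by auto
  next
    case (Cons t T')
    have "R = butlast R @ [last R]" using that by simp
    then have "okp (last R) t" using sRT Cons succ_mid[of okp "butlast R" "last R" t T']
      by (metis append.assoc append_Cons append_Nil)
    moreover have "last R < t" using big Cons that by auto
    ultimately show ?thesis by (auto simp: okp_def)
  qed
  have ej: "even j"
  proof (cases "j = 2*n")
    case True then show ?thesis by simp
  next
    case False
    then have "j + 1 \<in> set R" using hR jle by auto
    then obtain R1 R2 where R12: "R = R1 @ (j+1) # R2" by (meson split_list)
    have "odd (j+1)"
    proof (cases R2)
      case Nil
      then have "last R = j + 1" using R12 by simp
      then show ?thesis using lastR R12 by auto
    next
      case (Cons z R3)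
      have "okp (j+1) z" using sRT R12 Cons succ_mid[of okp R1 "j+1" z "R3 @ T"] by simp
      moreover have "z \<in> set R" "z \<noteq> j+1" using R12 Cons dR by auto
      then have "j + 1 < z" using hR by auto
      ultimately show ?thesis by (auto simp: okp_def)
    qed
    then show ?thesis by simp
  qed
  define k where "k = j div 2"
  define m where "m = n - k"
  have j2k: "j = 2*k" using ej k_def by simp
  have km: "k + m = n" using jle j2k m_def by simp
  have lastL: "odd (last L)" if "L \<noteq> []"
  proof -
    obtain x mid' where mx: "mid = x # mid'" using mne by (cases mid) auto
    have "L = butlast L @ [last L]" using that by simp
    then have "okp (last L) x" using d mx succ_mid[of okp "butlast L" "last L" x "mid' @ R @ T"] unfolding dc_def
      by (metis append.assoc append_Cons append_Nil)
    moreover have "last L < x" using big mx that by auto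
    ultimately show ?thesis by (auto simp: okp_def)
  qed
  have "L \<in> VV k"
    unfolding mem_VV
  proof (intro conjI)
    show "is_perm_list (2*k) L" using dL hL j_def j2k by (simp add: is_perm_list_def)
    show "dc L" using sL lastL by (simp add: dc_def)
    show "av L" using a av_sub[of L "L @ mid @ R @ T"] subseq_rev_drop_many[OF subseq_order.order_refl, of L "mid @ R @ T"] by simp
  qed
  moreover have "\<exists>\<rho>\<in>VV m. R = map (\<lambda>v. v + 2*k) \<rho>"
  proof
    define \<rho> where "\<rho> = map (\<lambda>v. v - j) R"
    show R\<rho>: "R = map (\<lambda>v. v + 2*k) \<rho>"
      unfolding \<rho>_def map_map o_def using hR j2k by (intro map_idI[symmetric]) auto
    have ev: "even (2*k)" by simp
    show "\<rho> \<in> VV m"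
      unfolding mem_VV
    proof (intro conjI)
      have "length \<rho> = 2*m" using lenR j2k m_def \<rho>_def by simp
      moreover have "distinct \<rho>" using dR R\<rho> by (simp add: distinct_map)
      moreover have "set \<rho> = {1..2*m}"
      proof -
        have inj: "inj (\<lambda>v::nat. v + 2*k)" by (simp add: inj_def)
        have eq: "(\<lambda>v. v + 2*k) ` set \<rho> = (\<lambda>v. v + 2*k) ` {1..2*m}"
          using R\<rho> hR j2k km by (metis image_add_atLeastAtMost' set_map add.commute mult_2 add_mult_distrib2 Suc_eq_plus1 plus_1_eq_Suc)
        then show ?thesis using inj_image_eq_iff[OF inj] eq by blast
      qed
      ultimately show "is_perm_list (2*m) \<rho>" by (simp add: is_perm_list_def)
      have "dc R" using lastR sRT by (auto simp: dc_def successively_append_iff)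
      then show "dc \<rho>" using dc_shift[OF ev] R\<rho> by simp
      have "av R" using a av_sub subseq_infix by blast
      then show "av \<rho>" using av_shift R\<rho> by simp
    qed
  qed
  ultimately show ?thesis using km by blast
qed



definition F1 :: "nat \<Rightarrow> nat \<Rightarrow> nat list \<Rightarrow> nat list \<Rightarrow> nat list" where
  "F1 n k s r = s @ [2*n+2] @ map (\<lambda>v. v + 2*k) r @ [2*n+1]"
definition F2 :: "nat \<Rightarrow> nat \<Rightarrow> nat list \<Rightarrow> nat list \<Rightarrow> nat list" where
  "F2 n k s r = s @ [2*n+1, 2*n+2] @ map (\<lambda>v. v + 2*k) r"

lemma subseq_elem: "a \<in> set xs \<Longrightarrow> subseq ys zs \<Longrightarrow> subseq (a # ys) (xs @ zs)"
proof -
  assume "a \<in> set xs" "subseq ys zs"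
  then obtain xs1 xs2 where "xs = xs1 @ a # xs2" by (meson split_list)
  moreover have "subseq (a # ys) (a # xs2 @ zs)" using \<open>subseq ys zs\<close> by (simp add: subseq_drop_many)
  ultimately show ?thesis by (simp add: subseq_drop_many)
qed

lemma decomp:
  assumes "p \<in> VV (Suc n)"
  shows "(\<exists>k\<le>n. \<exists>s\<in>VV k. \<exists>r\<in>VV (n-k). p = F1 n k s r) \<or> (\<exists>k<n. \<exists>s\<in>VV k. \<exists>r\<in>VV (n-k). p = F2 n k s r)"
proof -
  have perm: "is_perm_list (2*Suc n) p" and d: "dc p" and a: "av p" using assms mem_VV by auto
  have dist: "distinct p" and st: "set p = {1..2*n+2}" using perm by (auto simp: is_perm_list_def)
  have "2*n+1 \<in> set p" using st by auto
  then obtain A B where AB: "p = A @ (2*n+1) # B" by (meson split_list)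
  show ?thesis
  proof (cases B)
    case Nil
    have "2*n+2 \<in> set p" using st by auto
    then have "2*n+2 \<in> set A" using AB Nil by auto
    then obtain L R where LR: "A = L @ (2*n+2) # R" by (meson split_list)
    have pe: "p = L @ [2*n+2] @ R @ [2*n+1]" using AB LR Nil by simp
    have sep: "\<forall>x\<in>set L. \<forall>c\<in>set R. x < c"
    proof (intro ballI, rule ccontr)
      fix x c assume xc: "x \<in> set L" "c \<in> set R" "\<not> x < c"
      have "x \<noteq> c" using dist pe xc by auto
      then have "c < x" using xc by simp
      have "x \<in> set p" "x \<noteq> 2*n+1" "x \<noteq> 2*n+2" using dist pe xc by auto
      then have "x < 2*n+1" using st by auto
      have "subseq [x, 2*n+2, c, 2*n+1] p"
        unfolding pe using xc by (auto intro!: subseq_elem simp: subseq_singleton_left)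
      then have "\<exists>a' b' c' d'. subseq [a',b',c',d'] p \<and> c'<a' \<and> a'<d' \<and> d'<b'"
        using \<open>c < x\<close> \<open>x < 2*n+1\<close>
        by (rule_tac exI[of _ x], rule_tac exI[of _ "2*n+2"], rule_tac exI[of _ c], rule_tac exI[of _ "2*n+1"]) simp
      then show False using a unfolding av_def by blast
    qed
    have "\<exists>k m. k + m = n \<and> L \<in> VV k \<and> (\<exists>\<rho>\<in>VV m. R = map (\<lambda>v. v + 2*k) \<rho>)"
      by (rule core[of n L "[2*n+2]" R "[2*n+1]"]) (use perm d a sep pe in auto)
    then obtain k m r where "k + m = n" "L \<in> VV k" "r \<in> VV m" "R = map (\<lambda>v. v + 2*k) r" by blast
    then have "p = F1 n k L r" "k \<le> n" "r \<in> VV (n-k)" "L \<in> VV k" using pe unfolding F1_def by auto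
    then have "\<exists>k\<le>n. \<exists>s\<in>VV k. \<exists>r\<in>VV (n-k). p = F1 n k s r" by blast
    then show ?thesis by blast
  next
    case (Cons y B')
    have "okp (2*n+1) y" using d AB Cons succ_mid[of okp A "2*n+1" y B'] by (simp add: dc_def)
    then have "2*n+1 < y" by (simp add: okp_def)
    moreover have "y \<in> set p" using AB Cons by simp
    ultimately have y: "y = 2*n+2" using st by auto
    have pe: "p = A @ [2*n+1, 2*n+2] @ B' @ []" using AB Cons y by simp
    have Bne: "B' \<noteq> []"
    proof
      assume "B' = []"
      then have "last p = 2*n+2" using pe by simp
      then show False using d unfolding dc_def using pe by auto
    qed
    have sep: "\<forall>x\<in>set A. \<forall>c\<in>set B'. x < c"
    proof (intro ballI, rule ccontr)
      fix x c assume xc: "x \<in> set A" "c \<in> set B'" "\<not> x < c"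
      have "x \<noteq> c" using dist pe xc by auto
      then have "c < x" using xc by simp
      have "x \<in> set p" "x \<noteq> 2*n+1" "x \<noteq> 2*n+2" using dist pe xc by auto
      then have "x < 2*n+1" using st by auto
      have "subseq [x, 2*n+1, 2*n+2, c] p"
        unfolding pe using xc by (auto intro!: subseq_elem simp: subseq_singleton_left)
      then have "\<exists>a' b' c' d'. subseq [a',b',c',d'] p \<and> d'<a' \<and> a'<b' \<and> b'<c'"
        using \<open>c < x\<close> \<open>x < 2*n+1\<close>
        by (rule_tac exI[of _ x], rule_tac exI[of _ "2*n+1"], rule_tac exI[of _ "2*n+2"], rule_tac exI[of _ c]) simp
      then show False using a unfolding av_def by blast
    qed
    have "\<exists>k m. k + m = n \<and> A \<in> VV k \<and> (\<exists>\<rho>\<in>VV m. B' = map (\<lambda>v. v + 2*k) \<rho>)"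
      by (rule core[of n A "[2*n+1, 2*n+2]" B' "[]"]) (use perm d a sep pe Bne in auto)
    then obtain k m r where km: "k + m = n" "A \<in> VV k" "r \<in> VV m" "B' = map (\<lambda>v. v + 2*k) r" by blast
    have "length r = 2*m" using km(3) by (simp add: mem_VV is_perm_list_def)
    moreover have "r \<noteq> []" using km(4) Bne by auto
    ultimately have "k < n" using km(1) by (cases m) auto
    then have "p = F2 n k A r" "k < n" "r \<in> VV (n-k)" "A \<in> VV k" using pe km unfolding F2_def by auto
    then have "\<exists>k<n. \<exists>s\<in>VV k. \<exists>r\<in>VV (n-k). p = F2 n k s r" by blast
    then show ?thesis by blast
  qed
qed



lemma shifted_props:
  assumes "r \<in> VV m"
  shows "set (map (\<lambda>v. v + c) r) = {c+1..c+2*m}" "distinct (map (\<lambda>v. v + c) r)"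
        "even c \<Longrightarrow> dc (map (\<lambda>v. v + c) r)" "av (map (\<lambda>v. v + c) r)"
        "length (map (\<lambda>v. v + c) r) = 2*m"
proof -
  show "set (map (\<lambda>v. v + c) r) = {c+1..c+2*m}" using assms by (simp add: mem_VV is_perm_list_def add.commute)
  show "distinct (map (\<lambda>v. v + c) r)" using assms by (simp add: mem_VV is_perm_list_def distinct_map)
  show "even c \<Longrightarrow> dc (map (\<lambda>v. v + c) r)" using assms dc_shift by (simp add: mem_VV)
  show "av (map (\<lambda>v. v + c) r)" using assms av_shift by (simp add: mem_VV)
  show "length (map (\<lambda>v. v + c) r) = 2*m" using assms by (simp add: mem_VV is_perm_list_def)
qed

lemma VV_props:
  assumes "s \<in> VV k"
  shows "set s = {1..2*k}" "distinct s" "length s = 2*k" "successively okp s"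
        "s \<noteq> [] \<Longrightarrow> odd (last s)" "av s"
  using assms by (auto simp: mem_VV is_perm_list_def dc_def)

lemma cons1:
  assumes km: "k + m = n" and s: "s \<in> VV k" and r: "r \<in> VV m"
  shows "F1 n k s r \<in> VV (Suc n)"
proof -
  define R where "R = map (\<lambda>v. v + 2*k) r"
  note Rp = shifted_props[OF r, of "2*k", folded R_def]
  note sp = VV_props[OF s]
  have setR: "set R = {2*k+1..2*n}" using Rp(1) km by simp
  have F: "F1 n k s r = s @ (2*n+2) # (R @ [2*n+1])" unfolding F1_def R_def by simp
  have perm: "is_perm_list (2*Suc n) (F1 n k s r)"
  proof -
    have "length (F1 n k s r) = 2*Suc n" using F sp Rp km by simp
    moreover have "distinct (F1 n k s r)" using F sp(1,2) Rp(2) setR km by auto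
    moreover have "set (F1 n k s r) = {1..2*Suc n}"
    proof -
      have "set (F1 n k s r) = {1..2*k} \<union> {2*k+1..2*n} \<union> {2*n+1, 2*n+2}" using F sp(1) setR by auto
      also have "\<dots> = {1..2*Suc n}" using km by auto
      finally show ?thesis .
    qed
    ultimately show ?thesis by (simp add: is_perm_list_def)
  qed
  have sR: "successively okp (R @ [2*n+1])"
  proof -
    have "R \<noteq> [] \<Longrightarrow> okp (last R) (2*n+1)"
      using Rp(3) setR by (auto simp: okp_def dc_def) (metis last_in_set atLeastAtMost_iff le_imp_less_Suc)
    then show ?thesis using Rp(3) by (auto simp: successively_append_iff dc_def)
  qed
  have "successively okp ((2*n+2) # R @ [2*n+1])"
  proof -
    have le: "\<forall>v\<in>set R. v \<le> 2*n" using setR by auto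
    have "okp (2*n+2) (hd (R @ [2*n+1]))"
      using le by (cases R) (auto simp: okp_def)
    then show ?thesis using sR by (simp add: successively_Cons)
  qed
  moreover have "okp (last s) (2*n+2)" if "s \<noteq> []"
  proof -
    have "last s \<in> set s" using that by simp
    then have "last s \<le> 2*k" using sp(1) by auto
    then show ?thesis using sp(5) that km by (auto simp: okp_def)
  qed
  ultimately have "dc (F1 n k s r)" unfolding F dc_def
    using sp(4) by (auto simp: successively_append_iff)
  moreover have "av (F1 n k s r)"
  proof -
    have "av (R @ [2*n+1])" using Rp(4) setR by (intro av_snoc_max) auto
    then have "av ((2*n+2) # R @ [2*n+1])" using setR by (intro av_cons_max) auto
    then show ?thesis unfolding F using sp(1,6) setR km by (intro av_append) auto
  qed
  ultimately show ?thesis using perm by (simp add: mem_VV)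
qed

lemma cons2:
  assumes km: "k + m = n" and s: "s \<in> VV k" and r: "r \<in> VV m" and m: "m \<ge> 1"
  shows "F2 n k s r \<in> VV (Suc n)"
proof -
  define R where "R = map (\<lambda>v. v + 2*k) r"
  note Rp = shifted_props[OF r, of "2*k", folded R_def]
  note sp = VV_props[OF s]
  have setR: "set R = {2*k+1..2*n}" using Rp(1) km by simp
  have Rne: "R \<noteq> []" using Rp(5) m by auto
  have F: "F2 n k s r = s @ (2*n+1) # (2*n+2) # R" unfolding F2_def R_def by simp
  have perm: "is_perm_list (2*Suc n) (F2 n k s r)"
  proof -
    have "length (F2 n k s r) = 2*Suc n" using F sp Rp km by simp
    moreover have "distinct (F2 n k s r)" using F sp(1,2) Rp(2) setR km by auto
    moreover have "set (F2 n k s r) = {1..2*Suc n}"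
    proof -
      have "set (F2 n k s r) = {1..2*k} \<union> {2*k+1..2*n} \<union> {2*n+1, 2*n+2}" using F sp(1) setR by auto
      also have "\<dots> = {1..2*Suc n}" using km by auto
      finally show ?thesis .
    qed
    ultimately show ?thesis by (simp add: is_perm_list_def)
  qed
  have "successively okp ((2*n+1) # (2*n+2) # R)"
  proof -
    have le: "\<forall>v\<in>set R. v \<le> 2*n" using setR by auto
    have "okp (2*n+2) (hd R)" using le Rne by (cases R) (auto simp: okp_def)
    then show ?thesis using Rp(3) Rne by (auto simp: successively_Cons okp_def dc_def)
  qed
  moreover have "okp (last s) (2*n+1)" if "s \<noteq> []"
  proof -
    have "last s \<in> set s" using that by simp
    then have "last s \<le> 2*k" using sp(1) by auto
    then show ?thesis using sp(5) that km by (auto simp: okp_def)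
  qed
  moreover have "odd (last R)" using Rp(3) Rne by (simp add: dc_def)
  ultimately have "dc (F2 n k s r)" unfolding F dc_def
    using sp(4) Rne by (auto simp: successively_append_iff)
  moreover have "av (F2 n k s r)"
  proof -
    have "av ((2*n+1) # (2*n+2) # R)" using Rp(4) setR by (intro av_T2) auto
    then show ?thesis unfolding F using sp(1,6) setR km by (intro av_append) auto
  qed
  ultimately show ?thesis using perm by (simp add: mem_VV)
qed



lemma finite_VV: "finite (VV k)"
proof -
  have "VV k \<subseteq> {xs. set xs \<subseteq> {1..2*k} \<and> length xs = 2*k}"
    by (auto simp: mem_VV is_perm_list_def)
  moreover have "finite {xs. set xs \<subseteq> {1..2*k} \<and> length xs = 2*k}"
    by (rule finite_lists_length_eq) simp
  ultimately show ?thesis by (rule finite_subset)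
qed

lemma VV0: "VV 0 = {[]}"
  by (auto simp: mem_VV is_perm_list_def dc_def av_def)

lemma nth_at: "length s = j \<Longrightarrow> (s @ v # rest) ! j = v"
  by (simp add: nth_append)

lemma nth_before: "j < length s \<Longrightarrow> (s @ rest) ! j = s ! j"
  by (simp add: nth_append)

lemma VV_le: "s \<in> VV k \<Longrightarrow> j < length s \<Longrightarrow> s ! j \<le> 2*k"
  by (auto simp: mem_VV is_perm_list_def)

lemma VV_len: "s \<in> VV k \<Longrightarrow> length s = 2*k"
  by (auto simp: mem_VV is_perm_list_def)

lemma F1_inj:
  assumes e: "F1 n k s r = F1 n k' s' r'" and s: "s \<in> VV k" and s': "s' \<in> VV k'"
    and k: "k \<le> n" "k' \<le> n"
  shows "k = k' \<and> s = s' \<and> r = r'"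
proof -
  have kk: "k = k'"
  proof (rule ccontr)
    assume "k \<noteq> k'"
    then consider "k < k'" | "k' < k" by linarith
    then show False
    proof cases
      case 1
      have "F1 n k s r ! (2*k) = 2*n+2" unfolding F1_def using VV_len[OF s] by (simp add: nth_at)
      moreover have "F1 n k' s' r' ! (2*k) = s' ! (2*k)" unfolding F1_def using VV_len[OF s'] 1 by (simp add: nth_before)
      moreover have "s' ! (2*k) \<le> 2*k'" using VV_le[OF s'] VV_len[OF s'] 1 by simp
      ultimately show False using e k by simp
    next
      case 2
      have "F1 n k' s' r' ! (2*k') = 2*n+2" unfolding F1_def using VV_len[OF s'] by (simp add: nth_at)
      moreover have "F1 n k s r ! (2*k') = s ! (2*k')" unfolding F1_def using VV_len[OF s] 2 by (simp add: nth_before)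
      moreover have "s ! (2*k') \<le> 2*k" using VV_le[OF s] VV_len[OF s] 2 by simp
      ultimately show False using e k by simp
    qed
  qed
  have "s = s' \<and> map (\<lambda>v. v + 2*k) r = map (\<lambda>v. v + 2*k) r'"
    using e VV_len[OF s] VV_len[OF s'] kk unfolding F1_def by (simp add: append_eq_append_conv)
  moreover have "inj (\<lambda>v::nat. v + 2*k)" by (simp add: inj_def)
  ultimately show ?thesis using kk by (simp add: inj_map_eq_map)
qed

lemma F2_inj:
  assumes e: "F2 n k s r = F2 n k' s' r'" and s: "s \<in> VV k" and s': "s' \<in> VV k'"
    and k: "k \<le> n" "k' \<le> n"
  shows "k = k' \<and> s = s' \<and> r = r'"
proof -
  have kk: "k = k'"
  proof (rule ccontr)
    assume "k \<noteq> k'"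
    then consider "k < k'" | "k' < k" by linarith
    then show False
    proof cases
      case 1
      have "F2 n k s r ! (2*k) = 2*n+1" unfolding F2_def using VV_len[OF s] by (simp add: nth_at)
      moreover have "F2 n k' s' r' ! (2*k) = s' ! (2*k)" unfolding F2_def using VV_len[OF s'] 1 by (simp add: nth_before)
      moreover have "s' ! (2*k) \<le> 2*k'" using VV_le[OF s'] VV_len[OF s'] 1 by simp
      ultimately show False using e k by simp
    next
      case 2
      have "F2 n k' s' r' ! (2*k') = 2*n+1" unfolding F2_def using VV_len[OF s'] by (simp add: nth_at)
      moreover have "F2 n k s r ! (2*k') = s ! (2*k')" unfolding F2_def using VV_len[OF s] 2 by (simp add: nth_before)
      moreover have "s ! (2*k') \<le> 2*k" using VV_le[OF s] VV_len[OF s] 2 by simp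
      ultimately show False using e k by simp
    qed
  qed
  have "s = s' \<and> map (\<lambda>v. v + 2*k) r = map (\<lambda>v. v + 2*k) r'"
    using e VV_len[OF s] VV_len[OF s'] kk unfolding F2_def by (simp add: append_eq_append_conv)
  moreover have "inj (\<lambda>v::nat. v + 2*k)" by (simp add: inj_def)
  ultimately show ?thesis using kk by (simp add: inj_map_eq_map)
qed

definition W1 :: "nat \<Rightarrow> (nat \<times> nat list \<times> nat list) set" where
  "W1 n = Sigma {..n} (\<lambda>k. VV k \<times> VV (n-k))"
definition W2 :: "nat \<Rightarrow> (nat \<times> nat list \<times> nat list) set" where
  "W2 n = Sigma {..<n} (\<lambda>k. VV k \<times> VV (n-k))"
definition G1 where "G1 n = (\<lambda>(k, s, r). F1 n k s r)"
definition G2 where "G2 n = (\<lambda>(k, s, r). F2 n k s r)"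

lemma VV_Suc: "VV (Suc n) = G1 n ` W1 n \<union> G2 n ` W2 n"
proof
  show "VV (Suc n) \<subseteq> G1 n ` W1 n \<union> G2 n ` W2 n"
  proof
    fix p assume "p \<in> VV (Suc n)"
    from decomp[OF this] show "p \<in> G1 n ` W1 n \<union> G2 n ` W2 n"
    proof
      assume "\<exists>k\<le>n. \<exists>s\<in>VV k. \<exists>r\<in>VV (n-k). p = F1 n k s r"
      then obtain k s r where "k \<le> n" "s \<in> VV k" "r \<in> VV (n-k)" "p = F1 n k s r" by blast
      then have "(k, s, r) \<in> W1 n" "p = G1 n (k, s, r)" by (auto simp: W1_def G1_def)
      then show ?thesis by blast
    next
      assume "\<exists>k<n. \<exists>s\<in>VV k. \<exists>r\<in>VV (n-k). p = F2 n k s r"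
      then obtain k s r where "k < n" "s \<in> VV k" "r \<in> VV (n-k)" "p = F2 n k s r" by blast
      then have "(k, s, r) \<in> W2 n" "p = G2 n (k, s, r)" by (auto simp: W2_def G2_def)
      then show ?thesis by blast
    qed
  qed
  show "G1 n ` W1 n \<union> G2 n ` W2 n \<subseteq> VV (Suc n)"
  proof
    fix p assume "p \<in> G1 n ` W1 n \<union> G2 n ` W2 n"
    then show "p \<in> VV (Suc n)"
    proof
      assume "p \<in> G1 n ` W1 n"
      then obtain k s r where "k \<le> n" "s \<in> VV k" "r \<in> VV (n-k)" "p = F1 n k s r"
        by (auto simp: W1_def G1_def)
      then show ?thesis using cons1[of k "n-k" n s r] by simp
    next
      assume "p \<in> G2 n ` W2 n"
      then obtain k s r where "k < n" "s \<in> VV k" "r \<in> VV (n-k)" "p = F2 n k s r"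
        by (auto simp: W2_def G2_def)
      then show ?thesis using cons2[of k "n-k" n s r] by simp
    qed
  qed
qed

lemma inj1: "inj_on (G1 n) (W1 n)"
  by (rule inj_onI) (auto simp: W1_def G1_def dest: F1_inj)

lemma inj2: "inj_on (G2 n) (W2 n)"
  by (rule inj_onI) (auto simp: W2_def G2_def dest: F2_inj)

lemma disj: "G1 n ` W1 n \<inter> G2 n ` W2 n = {}"
proof -
  have "last p = 2*n+1" if "p \<in> G1 n ` W1 n" for p
    using that by (auto simp: W1_def G1_def F1_def)
  moreover have "last p \<le> 2*n" if hp: "p \<in> G2 n ` W2 n" for p
  proof -
    obtain k s r where "k < n" "s \<in> VV k" "r \<in> VV (n-k)" "p = F2 n k s r"
      using hp by (auto simp: W2_def G2_def)
    moreover have "r \<noteq> []" using VV_len[OF \<open>r \<in> VV (n-k)\<close>] \<open>k < n\<close> by auto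
    moreover have "last r \<le> 2*(n-k)"
      using VV_le[OF \<open>r \<in> VV (n-k)\<close>, of "length r - 1"] \<open>r \<noteq> []\<close> by (simp add: last_conv_nth)
    ultimately show ?thesis by (simp add: F2_def last_map)
  qed
  ultimately show ?thesis by fastforce
qed

theorem card_VV: "card (VV n) = cc n"
proof (induction n rule: less_induct)
  case (less n)
  show ?case
  proof (cases n)
    case 0 then show ?thesis by (simp add: VV0)
  next
    case (Suc n')
    have fin1: "finite (W1 n')" unfolding W1_def by (auto intro!: finite_SigmaI finite_cartesian_product finite_VV)
    have fin2: "finite (W2 n')" unfolding W2_def by (auto intro!: finite_SigmaI finite_cartesian_product finite_VV)
    have "card (VV n) = card (G1 n' ` W1 n') + card (G2 n' ` W2 n')"
      unfolding Suc VV_Suc using fin1 fin2 disj by (simp add: card_Un_disjoint)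
    also have "\<dots> = card (W1 n') + card (W2 n')"
      using inj1 inj2 by (simp add: card_image)
    also have "card (W1 n') = (\<Sum>k\<le>n'. cc k * cc (n'-k))"
      unfolding W1_def using less Suc
      by (simp add: card_SigmaI finite_cartesian_product finite_VV card_cartesian_product)
    also have "card (W2 n') = (\<Sum>k<n'. cc k * cc (n'-k))"
      unfolding W2_def using less Suc
      by (simp add: card_SigmaI finite_cartesian_product finite_VV card_cartesian_product)
    finally show ?thesis using Suc by simp
  qed
qed


theorem theorem3p5:
  fixes n :: nat
  shows "real (card (dumont1_avoiding n {[2,3,4,1], [2,4,1,3]})) = little_schroeder (n + 1)"
  using card_VV[of n, unfolded VV_def] main_fps[of n] by simp

end
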